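(* Let $\mathcal{C}$ be a $d$-uniform properly-connected hypergraph on $V$ and $F$ an edge of $\mathcal{C}$. Then: (i) an edge $C$ of $\mathcal{C}$ is an edge of $\mathcal{C}:F$ if and only if $\operatorname{dist}_{\mathcal{C}}(F,C)\ge d+1$; (ii) $\mathcal{C}:F=\mathcal{C}_{V\setminus(F\cup N_{\mathcal{C}}(F))}$; (iii) the edge set of $\mathcal{C}:F$ equals $\mathcal{C}^{\ge}=\{G\in\mathcal{C}: \operatorname{dist}_{\mathcal{C}}(F,G)\ge d+1\}$; (iv) $\operatorname{c}_{\mathcal{C}}\ge \operatorname{c}_{\mathcal{C}:F}+1$, where $\operatorname{c}_{\mathcal{D}}$ denotes the maximum number of pairwise $(d+1)$-disjoint edges of $\mathcal{D}$.
   Context: A hypergraph $\mathcal{C}$ on a finite vertex set $V$ is a family of pairwise incomparable subsets of $V$ (its edges), each of cardinality at least $2$; it is $d$-uniform if every edge has $d$ elements. For an edge $F$: $N_{\mathcal{C}}(F)=\bigcup\{E\setminus F : E\in\mathcal{C},\ |E\setminus F|=1\}$, and $\mathcal{C}:F$ is the hypergraph on $V\setminus(F\cup N_{\mathcal{C}}(F))$ whose edges are the members of cardinality at least $2$ among the inclusion-minimal members of $\{E\setminus F: E\in\mathcal{C},E\neq F\}$. For $A\subseteq V$, $\mathcal{C}_A=\{E\in\mathcal{C}: E\subseteq A\}$ is the induced subhypergraph on $A$. Given edges $F,G$ with $|F|\ge |G|$, a proper chain from $F$ to $G$ is a sequence $(E_0=F,x_1,E_1,x_2,\dots,x_n,E_n=G)$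 with distinct vertices $x_i$ and distinct edges $E_j$ such that $x_1\in E_0$, $x_n\in E_n$, $x_k,x_{k+1}\in E_k$ for $k=1,\dots,n-1$, and $|E_i\cap E_{i+1}|=|E_{i+1}|-1$ for $i=0,\dots,n-1$; its length is $n$. It is irredundant if no subsequence of it is a proper chain from $F$ to $G$. The distance $\operatorname{dist}_{\mathcal{C}}(F,G)$ is the minimum length of a proper irredundant chain from $F$ to $G$ ($\infty$ if none). A $d$-uniform hypergraph is properly-connected if $\operatorname{dist}_{\mathcal{C}}(F,G)=d-|F\cap G|$ for any two edges with $F\cap G\neq\emptyset$. A set of edges is pairwise $t$-disjoint if any two of its distinct members have distance at least $t$ (distances in (iv) for $\mathcal{C}:F$ are taken in $\mathcal{C}:F$). *)

theory Defs
  imports Main "HOL-Library.Extended_Nat" "HOL-Library.Sublist"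
begin

definition hypergraph :: "'a set \<Rightarrow> 'a set set \<Rightarrow> bool" where
  "hypergraph V C \<longleftrightarrow> finite V \<and> (\<forall>E\<in>C. E \<subseteq> V \<and> 2 \<le> card E)
     \<and> (\<forall>E\<in>C. \<forall>G\<in>C. E \<subseteq> G \<longrightarrow> E = G)"

definition uniform :: "'a set set \<Rightarrow> nat \<Rightarrow> bool" where
  "uniform C d \<longleftrightarrow> (\<forall>E\<in>C. card E = d)"

definition nbhd :: "'a set set \<Rightarrow> 'a set \<Rightarrow> 'a set" where
  "nbhd C F = \<Union>{E - F | E. E \<in> C \<and> card (E - F) = 1}"

text \<open>Edge set of C:F (its vertex set is V - (F \<union> nbhd C F)).\<close>
definition colon :: "'a set set \<Rightarrow> 'a set \<Rightarrow> 'a set set" where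
  "colon C F = (let M = {E - F | E. E \<in> C \<and> E \<noteq> F} in
     {H. H \<in> M \<and> (\<forall>K\<in>M. K \<subseteq> H \<longrightarrow> K = H) \<and> 2 \<le> card H})"

definition induced :: "'a set set \<Rightarrow> 'a set \<Rightarrow> 'a set set" where
  "induced C A = {E \<in> C. E \<subseteq> A}"

text \<open>A chain (E_0, x_1, E_1, ..., x_n, E_n) is represented by the list Es = [E_0,...,E_n]
  and the list xs = [x_1,...,x_n] (so x_k = xs!(k-1)). The case n = 0 is the trivial chain (F).\<close>
definition proper_chain :: "'a set set \<Rightarrow> 'a set \<Rightarrow> 'a set \<Rightarrow> 'a set list \<Rightarrow> 'a list \<Rightarrow> bool" where
  "proper_chain C F G Es xs \<longleftrightarrow> (let n = length xs in
     length Es = n + 1 \<and> Es ! 0 = F \<and> Es ! n = G \<and> card G \<le> card F \<and>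
     set Es \<subseteq> C \<and> distinct Es \<and> distinct xs \<and>
     (n \<ge> 1 \<longrightarrow> xs ! 0 \<in> Es ! 0 \<and> xs ! (n - 1) \<in> Es ! n) \<and>
     (\<forall>k. 1 \<le> k \<and> k \<le> n - 1 \<longrightarrow> xs ! (k - 1) \<in> Es ! k \<and> xs ! k \<in> Es ! k) \<and>
     (\<forall>i < n. card (Es ! i \<inter> Es ! (i + 1)) = card (Es ! (i + 1)) - 1))"

fun chain_seq :: "'a set list \<Rightarrow> 'a list \<Rightarrow> ('a set + 'a) list" where
  "chain_seq (E # Es) (x # xs) = Inl E # Inr x # chain_seq Es xs"
| "chain_seq Es [] = map Inl Es"
| "chain_seq [] xs = map Inr xs"

definition irredundant :: "'a set set \<Rightarrow> 'a set \<Rightarrow> 'a set \<Rightarrow> 'a set list \<Rightarrow> 'a list \<Rightarrow> bool" where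
  "irredundant C F G Es xs \<longleftrightarrow>
     \<not> (\<exists>Es' xs'. proper_chain C F G Es' xs' \<and> strict_subseq (chain_seq Es' xs') (chain_seq Es xs))"

definition hdist :: "'a set set \<Rightarrow> 'a set \<Rightarrow> 'a set \<Rightarrow> enat" where
  "hdist C F G = (INF xs \<in> {xs. \<exists>Es. proper_chain C F G Es xs \<and> irredundant C F G Es xs}.
                     enat (length xs))"

definition properly_connected :: "'a set set \<Rightarrow> nat \<Rightarrow> bool" where
  "properly_connected C d \<longleftrightarrow> uniform C d \<and>
     (\<forall>F\<in>C. \<forall>G\<in>C. F \<inter> G \<noteq> {} \<longrightarrow> hdist C F G = enat (d - card (F \<inter> G)))"

definition pairwise_disjoint_t :: "'a set set \<Rightarrow> nat \<Rightarrow> 'a set set \<Rightarrow> bool" where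
  "pairwise_disjoint_t D t S \<longleftrightarrow> (\<forall>E\<in>S. \<forall>G\<in>S. E \<noteq> G \<longrightarrow> hdist D E G \<ge> enat t)"

definition cnum :: "'a set set \<Rightarrow> nat \<Rightarrow> nat" where
  "cnum D d = Max {card S | S. S \<subseteq> D \<and> pairwise_disjoint_t D (d + 1) S}"

end

theory Submission
  imports Defs
begin


lemma chain_seq_len: "length Es = length xs + 1 \<Longrightarrow> length (chain_seq Es xs) = 2 * length xs + 1"
proof (induction xs arbitrary: Es)
  case Nil then show ?case by simp
next
  case (Cons x xs) then show ?case by (cases Es) auto
qed

lemma pc_len: "proper_chain C F G Es xs \<Longrightarrow> length Es = length xs + 1"
  by (simp add: proper_chain_def Let_def)

lemma hdist_le: "proper_chain C F G Es xs \<Longrightarrow> hdist C F G \<le> enat (length xs)"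
proof (induction "length xs" arbitrary: Es xs rule: less_induct)
  case less
  show ?case
  proof (cases "irredundant C F G Es xs")
    case True
    then have "xs \<in> {xs. \<exists>Es. proper_chain C F G Es xs \<and> irredundant C F G Es xs}"
      using less.prems by blast
    then show ?thesis unfolding hdist_def by (rule INF_lower)
  next
    case False
    then obtain Es' xs' where pc: "proper_chain C F G Es' xs'"
      and ss: "strict_subseq (chain_seq Es' xs') (chain_seq Es xs)"
      unfolding irredundant_def by blast
    have l1: "length (chain_seq Es' xs') = 2 * length xs' + 1" using chain_seq_len pc_len[OF pc] .
    have l2: "length (chain_seq Es xs) = 2 * length xs + 1" using chain_seq_len pc_len[OF less.prems] .
    have "length (chain_seq Es' xs') \<le> length (chain_seq Es xs)"
      using ss unfolding strict_subseq_def by (meson list_emb_length)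
    moreover have "length (chain_seq Es' xs') \<noteq> length (chain_seq Es xs)"
      using ss subseq_same_length unfolding strict_subseq_def by blast
    ultimately have "length xs' < length xs" using l1 l2 by simp
    then have "hdist C F G \<le> enat (length xs')" using less.hyps pc by blast
    also have "\<dots> \<le> enat (length xs)" using \<open>length xs' < length xs\<close> by simp
    finally show ?thesis .
  qed
qed

lemma hdist_obtain:
  assumes "hdist C F G \<le> enat k"
  shows "\<exists>Es xs. proper_chain C F G Es xs \<and> length xs \<le> k"
proof -
  let ?A = "(\<lambda>xs. enat (length xs)) ` {xs. \<exists>Es. proper_chain C F G Es xs \<and> irredundant C F G Es xs}"
  have h: "hdist C F G = Inf ?A" unfolding hdist_def by simp
  have ne: "?A \<noteq> {}"
  proof
    assume "?A = {}"
    then have "hdist C F G = \<infinity>" using h by (simp add: Inf_enat_def)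
    then show False using assms by simp
  qed
  then have "Inf ?A \<in> ?A" unfolding Inf_enat_def
    by (metis (no_types, lifting) LeastI_ex ex_in_conv)
  then obtain xs Es where "proper_chain C F G Es xs" "hdist C F G = enat (length xs)"
    using h by auto
  then show ?thesis using assms by auto
qed

lemma not_ge_Suc: "(\<not> enat (d + 1) \<le> h) \<longleftrightarrow> h \<le> enat d"
  by (cases h) auto



lemma pc_facts:
  assumes "proper_chain C E G Es xs" "\<forall>X\<in>C. finite X \<and> card X = d"
  shows "length Es = length xs + 1" "Es!0 = E" "Es!(length xs) = G" "distinct Es" "distinct xs"
    "\<forall>i\<le>length xs. Es!i \<in> C \<and> finite (Es!i) \<and> card (Es!i) = d"
    "\<forall>i<length xs. card (Es!i \<inter> Es!Suc i) = d - 1"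
proof -
  have L: "length Es = length xs + 1" and S: "set Es \<subseteq> C"
    and I: "\<forall>i<length xs. card (Es ! i \<inter> Es ! (i + 1)) = card (Es ! (i + 1)) - 1"
    using assms(1) by (auto simp: proper_chain_def Let_def)
  show "length Es = length xs + 1" "Es!0 = E" "Es!(length xs) = G" "distinct Es" "distinct xs"
    using assms(1) by (auto simp: proper_chain_def Let_def)
  show A: "\<forall>i\<le>length xs. Es!i \<in> C \<and> finite (Es!i) \<and> card (Es!i) = d"
  proof (intro allI impI)
    fix i assume "i \<le> length xs"
    then have "Es!i \<in> C" using L S by (metis less_add_one nth_mem order_le_less_trans subsetD)
    then show "Es!i \<in> C \<and> finite (Es!i) \<and> card (Es!i) = d" using assms(2) by blast
  qed
  show "\<forall>i<length xs. card (Es!i \<inter> Es!Suc i) = d - 1"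
    using I A by (metis Suc_eq_plus1 Suc_leI)
qed

lemma step_le:
  assumes "finite X" "finite Y" "card X = d" "card Y = d" "card (X \<inter> Y) = d - 1" "d \<ge> 1"
  shows "card (Y \<inter> A) \<le> card (X \<inter> A) + 1"
proof -
  have c1: "card (Y - X) = 1"
    using assms by (simp add: card_Diff_subset_Int Int_commute)
  have "Y \<inter> A \<subseteq> (X \<inter> A) \<union> (Y - X)" by blast
  then have "card (Y \<inter> A) \<le> card ((X \<inter> A) \<union> (Y - X))"
    using assms by (intro card_mono) auto
  also have "\<dots> \<le> card (X \<inter> A) + card (Y - X)" by (rule card_Un_le)
  finally show ?thesis using c1 by simp
qed

lemma step_eq:
  assumes "finite X" "finite Y" "card X = d" "card Y = d" "card (X \<inter> Y) = d - 1" "d \<ge> 1"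
    "card (Y \<inter> A) = card (X \<inter> A) + 1"
  shows "Y - X \<subseteq> A" "X \<inter> A \<subseteq> Y"
proof -
  have c1: "card (Y - X) = 1"
    using assms by (simp add: card_Diff_subset_Int Int_commute)
  then obtain u where u: "Y - X = {u}" by (meson card_1_singletonE)
  show "Y - X \<subseteq> A"
  proof (rule ccontr)
    assume "\<not> Y - X \<subseteq> A"
    then have "u \<notin> A" using u by auto
    then have "Y \<inter> A \<subseteq> X \<inter> A" using u by (metis Diff_iff Int_iff singletonD subsetI)
    then have "card (Y \<inter> A) \<le> card (X \<inter> A)" using assms by (intro card_mono) auto
    then show False using assms(7) by simp
  qed
  show "X \<inter> A \<subseteq> Y"
  proof (rule ccontr)
    assume "\<not> X \<inter> A \<subseteq> Y"
    then obtain g where g: "g \<in> X" "g \<in> A" "g \<notin> Y" by blast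
    have "Y \<inter> A \<subseteq> ((X \<inter> A) - {g}) \<union> (Y - X)" using g by blast
    then have "card (Y \<inter> A) \<le> card (((X \<inter> A) - {g}) \<union> (Y - X))"
      using assms by (intro card_mono) auto
    also have "\<dots> \<le> card ((X \<inter> A) - {g}) + card (Y - X)" by (rule card_Un_le)
    also have "\<dots> = card (X \<inter> A) - 1 + 1" using c1 g assms(1) by simp
    finally have "card (Y \<inter> A) \<le> card (X \<inter> A) - 1 + 1" .
    moreover have "card (X \<inter> A) \<ge> 1" using g assms(1)
      by (metis IntI card_0_eq empty_iff finite_Int less_one linorder_not_le)
    ultimately show False using assms(7) by simp
  qed
qed

lemma count_chain:
  assumes "\<forall>i\<le>n. finite (Es!i) \<and> card (Es!i) = d" "\<forall>i<n. card (Es!i \<inter> Es!Suc i) = d - 1"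
    "d \<ge> 1" "i \<le> j" "j \<le> n"
  shows "card (Es!j \<inter> A) \<le> card (Es!i \<inter> A) + (j - i)"
  using assms(4,5)
proof (induction j rule: dec_induct)
  case base then show ?case by simp
next
  case (step j)
  have "card (Es!Suc j \<inter> A) \<le> card (Es!j \<inter> A) + 1"
    using assms(1,2,3) step.prems step.hyps
    by (intro step_le) auto
  then show ?case using step by simp
qed

lemma chain_lower:
  assumes "proper_chain C E G Es xs" "\<forall>X\<in>C. finite X \<and> card X = d" "d \<ge> 1"
  shows "card (G - E) \<le> length xs"
proof -
  note f = pc_facts[OF assms(1,2)]
  have "card (Es!length xs \<inter> G) \<le> card (Es!0 \<inter> G) + (length xs - 0)"
    using f(6,7) assms(3) by (intro count_chain[where n="length xs"]) auto
  then have "card G \<le> card (E \<inter> G) + length xs" using f(2,3) by simp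
  moreover have "card (G - E) = card G - card (E \<inter> G)"
    using f(6) f(3) by (metis Int_commute card_Diff_subset_Int finite_Int order_refl)
  ultimately show ?thesis by simp
qed



lemma chain_mono:
  assumes "proper_chain C E G Es xs" "\<forall>X\<in>C. finite X \<and> card X = d" "d \<ge> 1"
    "length xs = card (G - E)"
  shows "\<forall>j\<le>length xs. card (Es!j \<inter> G) = card (E \<inter> G) + j"
    "\<forall>j<length xs. Es!Suc j - Es!j \<subseteq> G \<and> Es!j \<inter> G \<subseteq> Es!Suc j"
    "\<forall>j\<le>length xs. Es!j \<subseteq> E \<union> G"
    "\<forall>a b. a \<le> b \<longrightarrow> b \<le> length xs \<longrightarrow> Es!a \<inter> G \<subseteq> Es!b"
proof -
  note f = pc_facts[OF assms(1,2)]
  define n where "n = length xs"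
  have fG: "finite G" "card G = d" using f(6) f(3) by auto
  have fE: "finite E" "card E = d" using f(6) f(2) by auto
  have cGE: "card (G - E) = d - card (E \<inter> G)"
    using fG by (metis Int_commute card_Diff_subset_Int finite_Int)
  have le: "card (E \<inter> G) \<le> d" using fG by (metis card_mono inf_le2)
  show A: "\<forall>j\<le>length xs. card (Es!j \<inter> G) = card (E \<inter> G) + j"
  proof (intro allI impI)
    fix j assume j: "j \<le> length xs"
    have u: "card (Es!j \<inter> G) \<le> card (Es!0 \<inter> G) + (j - 0)"
      using f(6,7) assms(3) j by (intro count_chain[where n="length xs"]) auto
    have l: "card (Es!length xs \<inter> G) \<le> card (Es!j \<inter> G) + (length xs - j)"
      using f(6,7) assms(3) j by (intro count_chain[where n="length xs"]) auto
    then have "d \<le> card (Es!j \<inter> G) + (length xs - j)" using f(3) fG by simp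
    then show "card (Es!j \<inter> G) = card (E \<inter> G) + j" using u f(2) assms(4) cGE le j by simp
  qed
  show B: "\<forall>j<length xs. Es!Suc j - Es!j \<subseteq> G \<and> Es!j \<inter> G \<subseteq> Es!Suc j"
  proof (intro allI impI)
    fix j assume j: "j < length xs"
    have e: "card (Es!Suc j \<inter> G) = card (Es!j \<inter> G) + 1" using A j by simp
    have h: "finite (Es!j)" "finite (Es!Suc j)" "card (Es!j) = d" "card (Es!Suc j) = d"
      "card (Es!j \<inter> Es!Suc j) = d - 1"
      using f(6,7) j by auto
    show "Es!Suc j - Es!j \<subseteq> G \<and> Es!j \<inter> G \<subseteq> Es!Suc j"
      using step_eq[OF h assms(3) e] by blast
  qed
  show "\<forall>j\<le>length xs. Es!j \<subseteq> E \<union> G"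
  proof (intro allI impI)
    fix j assume "j \<le> length xs"
    then show "Es!j \<subseteq> E \<union> G"
    proof (induction j)
      case 0 then show ?case using f(2) by simp
    next
      case (Suc j)
      then have "Es!j \<subseteq> E \<union> G" by simp
      moreover have "Es!Suc j - Es!j \<subseteq> G" using B Suc.prems by simp
      ultimately show ?case by blast
    qed
  qed
  show "\<forall>a b. a \<le> b \<longrightarrow> b \<le> length xs \<longrightarrow> Es!a \<inter> G \<subseteq> Es!b"
  proof (intro allI impI)
    fix a b assume ab: "a \<le> b" "b \<le> length xs"
    then show "Es!a \<inter> G \<subseteq> Es!b"
    proof (induction b rule: dec_induct)
      case base then show ?case by simp
    next
      case (step b)
      then have "Es!a \<inter> G \<subseteq> Es!b \<inter> G" by simp
      moreover have "Es!b \<inter> G \<subseteq> Es!Suc b" using B step by simp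
      ultimately show ?case by blast
    qed
  qed
qed

lemma first_step:
  assumes "proper_chain C F G Es xs" "\<forall>X\<in>C. finite X \<and> card X = d" "d \<ge> 1" "length xs \<ge> 1"
  shows "\<exists>w. Es!1 - F = {w} \<and> Es!1 \<in> C \<and> Es!1 \<noteq> F"
proof -
  note f = pc_facts[OF assms(1,2)]
  have h: "Es!1 \<in> C" "finite (Es!1)" "card (Es!1) = d" "card (Es!0 \<inter> Es!1) = d - 1"
  proof -
    have "0 < length xs" "1 \<le> length xs" using assms(4) by auto
    then show "Es!1 \<in> C" "finite (Es!1)" "card (Es!1) = d" using f(6) by auto
    have "card (Es!0 \<inter> Es!Suc 0) = d - 1" using f(7) \<open>0 < length xs\<close> by blast
    then show "card (Es!0 \<inter> Es!1) = d - 1" by simp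
  qed
  have "card (Es!1 - F) = 1"
    using h f(2) assms(3) by (simp add: card_Diff_subset_Int Int_commute)
  then obtain w where "Es!1 - F = {w}" by (meson card_1_singletonE)
  moreover have "Es!1 \<noteq> F"
  proof -
    have "0 < length Es" "1 < length Es" using f(1) assms(4) by auto
    then have "Es!1 \<noteq> Es!0" using f(4) by (simp add: nth_eq_iff_index_eq)
    then show ?thesis using f(2) by simp
  qed
  ultimately show ?thesis using h by blast
qed



lemma basics:
  assumes "hypergraph V C" "uniform C d" "F \<in> C"
  shows "\<forall>X\<in>C. finite X \<and> card X = d" "d \<ge> 2" "\<forall>X\<in>C. X \<subseteq> V"
    "\<And>X Y. X \<in> C \<Longrightarrow> Y \<in> C \<Longrightarrow> X \<subseteq> Y \<Longrightarrow> X = Y" "finite C"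
proof -
  have fV: "finite V" and sub: "\<forall>E\<in>C. E \<subseteq> V" and c2: "\<forall>E\<in>C. 2 \<le> card E"
    and inc: "\<forall>E\<in>C. \<forall>G\<in>C. E \<subseteq> G \<longrightarrow> E = G"
    using assms(1) unfolding hypergraph_def by auto
  have cd: "\<forall>E\<in>C. card E = d" using assms(2) unfolding uniform_def .
  show "\<forall>X\<in>C. finite X \<and> card X = d" using fV sub cd by (meson finite_subset)
  show "d \<ge> 2" using c2 cd assms(3) by metis
  show "\<forall>X\<in>C. X \<subseteq> V" using sub .
  show "\<And>X Y. X \<in> C \<Longrightarrow> Y \<in> C \<Longrightarrow> X \<subseteq> Y \<Longrightarrow> X = Y" using inc by blast
  have "C \<subseteq> Pow V" using sub by blast
  then show "finite C" using fV by (meson finite_Pow_iff finite_subset)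
qed

lemma card_diff_d:
  assumes "finite X" "finite Y" "card X = d" "card Y = d"
  shows "card (Y - X) = d - card (X \<inter> Y)"
  using assms by (metis Int_commute card_Diff_subset_Int finite_Int)

lemma pc_chain:
  assumes "hypergraph V C" "uniform C d" "properly_connected C d" "F \<in> C"
    "X \<in> C" "Y \<in> C" "X \<inter> Y \<noteq> {}"
  shows "\<exists>Es xs. proper_chain C X Y Es xs \<and> length xs = card (Y - X)"
proof -
  note b = basics[OF assms(1,2,4)]
  have h: "hdist C X Y = enat (d - card (X \<inter> Y))"
    using assms(3,5,6,7) unfolding properly_connected_def by blast
  have c: "card (Y - X) = d - card (X \<inter> Y)" using b(1) assms(5,6) card_diff_d by blast
  obtain Es xs where pc: "proper_chain C X Y Es xs" "length xs \<le> card (Y - X)"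
    using hdist_obtain[of C X Y "card (Y - X)"] h c by auto
  have "card (Y - X) \<le> length xs" using chain_lower[OF pc(1) b(1)] b(2) by simp
  then show ?thesis using pc by (intro exI[of _ Es] exI[of _ xs]) auto
qed

lemma nbhdI: "E \<in> C \<Longrightarrow> E - F = {w} \<Longrightarrow> w \<in> nbhd C F"
proof -
  assume a: "E \<in> C" "E - F = {w}"
  then have m: "E - F \<in> {E - F | E. E \<in> C \<and> card (E - F) = 1}" by (intro CollectI exI[of _ E]) simp
  have "w \<in> E - F" using a by simp
  then have "w \<in> \<Union>{E - F | E. E \<in> C \<and> card (E - F) = 1}" using m by (rule UnionI[rotated])
  then show ?thesis unfolding nbhd_def .
qed

lemma key1:
  assumes "hypergraph V C" "uniform C d" "properly_connected C d" "F \<in> C"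
    "E \<in> C" "E \<inter> F \<noteq> {}" "E \<noteq> F"
  shows "\<exists>w E1. w \<in> E - F \<and> w \<in> nbhd C F \<and> E1 \<in> C \<and> E1 \<noteq> F \<and> E1 - F = {w}"
proof -
  note b = basics[OF assms(1,2,4)]
  obtain Es xs where pc: "proper_chain C F E Es xs" "length xs = card (E - F)"
    using pc_chain[OF assms(1-4) assms(4) assms(5)] assms(6) by blast
  have "E - F \<noteq> {}" using b(4)[OF assms(5,4)] assms(7) by blast
  then have "length xs \<ge> 1" using pc(2) b(1) assms(5)
    by (simp add: card_gt_0_iff Suc_le_eq)
  then obtain w where w: "Es!1 - F = {w}" "Es!1 \<in> C" "Es!1 \<noteq> F"
    using first_step[OF pc(1) b(1)] b(2) by auto
  have "Es!1 \<subseteq> F \<union> E"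
    using chain_mono(3)[OF pc(1) b(1) _ pc(2)] b(2) \<open>length xs \<ge> 1\<close> by auto
  then have "w \<in> E - F" using w by auto
  moreover have "w \<in> nbhd C F" using nbhdI w by metis
  ultimately show ?thesis using w by blast
qed



lemma colon_eq:
  assumes "hypergraph V C" "uniform C d" "properly_connected C d" "F \<in> C"
  shows "colon C F = induced C (V - (F \<union> nbhd C F))"
proof -
  note b = basics[OF assms(1,2,4)]
  define M where "M = {E - F | E. E \<in> C \<and> E \<noteq> F}"
  have col: "colon C F = {H. H \<in> M \<and> (\<forall>K\<in>M. K \<subseteq> H \<longrightarrow> K = H) \<and> 2 \<le> card H}"
    unfolding colon_def M_def Let_def by simp
  have Fne: "F \<noteq> {}" using b(1,2) assms(4) by (metis card.empty not_numeral_le_zero)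
  show ?thesis
  proof
    show "colon C F \<subseteq> induced C (V - (F \<union> nbhd C F))"
    proof
      fix H assume "H \<in> colon C F"
      then have H: "H \<in> M" "\<And>K. K \<in> M \<Longrightarrow> K \<subseteq> H \<Longrightarrow> K = H" "2 \<le> card H" using col by auto
      then obtain E where E: "H = E - F" "E \<in> C" "E \<noteq> F" unfolding M_def by blast
      have EF: "E \<inter> F = {}"
      proof (rule ccontr)
        assume "E \<inter> F \<noteq> {}"
        then obtain w E1 where w: "w \<in> E - F" "E1 \<in> C" "E1 \<noteq> F" "E1 - F = {w}"
          using key1[OF assms E(2) _ E(3)] by blast
        have "{w} \<in> M" unfolding M_def using w by (intro CollectI exI[of _ E1]) simp
        moreover have "{w} \<subseteq> H" using w E by blast
        ultimately have "{w} = H" using H(2) by blast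
        then have "card H = 1" by auto
        then show False using H(3) by simp
      qed
      then have HE: "H = E" using E by blast
      have "H \<inter> nbhd C F = {}"
      proof (rule ccontr)
        assume "H \<inter> nbhd C F \<noteq> {}"
        then obtain v where v: "v \<in> H" "v \<in> nbhd C F" by blast
        from v(2) have "v \<in> \<Union>{E - F | E. E \<in> C \<and> card (E - F) = 1}" unfolding nbhd_def .
        then obtain X where X: "X \<in> {E - F | E. E \<in> C \<and> card (E - F) = 1}" "v \<in> X" by (rule UnionE)
        then obtain E' where E': "E' \<in> C" "card (E' - F) = 1" "v \<in> E' - F" by auto
        then have s: "E' - F = {v}" by (metis card_1_singletonE singletonD)
        have "E' \<noteq> F" using E' by auto
        then have "{v} \<in> M" unfolding M_def using E'(1) s by (intro CollectI exI[of _ E']) simp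
        moreover have "{v} \<subseteq> H" using v by blast
        ultimately have "{v} = H" using H(2) by blast
        then have "card H = 1" by auto
        then show False using H(3) by simp
      qed
      then show "H \<in> induced C (V - (F \<union> nbhd C F))"
        unfolding induced_def using HE E(2) EF b(3) by blast
    qed
  next
    show "induced C (V - (F \<union> nbhd C F)) \<subseteq> colon C F"
    proof
      fix G assume "G \<in> induced C (V - (F \<union> nbhd C F))"
      then have G: "G \<in> C" "G \<subseteq> V" "G \<inter> F = {}" "G \<inter> nbhd C F = {}" unfolding induced_def by auto
      have "G \<noteq> F" using G(3) Fne by auto
      moreover have "G - F = G" using G(3) by blast
      ultimately have GM: "G \<in> M" unfolding M_def using G(1) by (intro CollectI exI[of _ G]) simp
      have min: "\<forall>K\<in>M. K \<subseteq> G \<longrightarrow> K = G"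
      proof (intro ballI impI)
        fix K assume "K \<in> M" "K \<subseteq> G"
        then obtain E where E: "K = E - F" "E \<in> C" "E \<noteq> F" unfolding M_def by blast
        show "K = G"
        proof (cases "E \<inter> F = {}")
          case True
          then have "K = E" using E by blast
          then show ?thesis using b(4)[OF E(2) G(1)] \<open>K \<subseteq> G\<close> by blast
        next
          case False
          then obtain w E1 where w: "w \<in> E - F" "w \<in> nbhd C F"
            using key1[OF assms E(2) _ E(3)] by blast
          then have "w \<in> G" using E \<open>K \<subseteq> G\<close> by blast
          then show ?thesis using w G(4) by blast
        qed
      qed
      have "2 \<le> card G" using b(1,2) G(1) by auto
      then show "G \<in> colon C F" using col GM min by blast
    qed
  qed
qed



lemma construct:
  assumes "hypergraph V C" "uniform C d" "properly_connected C d" "F \<in> C"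
    "G \<in> C" "G \<inter> F = {}" "E' \<in> C" "E' - F = {v}" "v \<in> G"
  shows "\<exists>Es xs. proper_chain C F G Es xs \<and> length xs \<le> d"
proof -
  note b = basics[OF assms(1,2,4)]
  have ok: "\<forall>X\<in>C. finite X \<and> card X = d" and d2: "d \<ge> 2" using b by auto
  have fF: "finite F" "card F = d" using ok assms(4) by auto
  have fE': "finite E'" "card E' = d" using ok assms(7) by auto
  have fG: "finite G" "card G = d" using ok assms(5) by auto
  have "card (E' - F) = d - card (F \<inter> E')" using card_diff_d[OF fF(1) fE'(1) fF(2) fE'(2)] .
  moreover have "card (E' - F) = 1" using assms(8) by simp
  moreover have "card (F \<inter> E') \<le> d" using fF by (metis card_mono inf_le1)
  ultimately have cFE: "card (F \<inter> E') = d - 1" by linarith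
  then have "F \<inter> E' \<noteq> {}" using d2 by (metis card.empty diff_is_0_eq le_numeral_extra(4) nat_le_linear numeral_le_one_iff semiring_norm(69) Suc_1 not_less_eq_eq diff_Suc_1)
  then obtain x where x: "x \<in> F" "x \<in> E'" by blast
  have E'G: "E' \<inter> G \<noteq> {}" using assms(8,9) by blast
  obtain Es zs where pc: "proper_chain C E' G Es zs" and lm: "length zs = card (G - E')"
    using pc_chain[OF assms(1-4) assms(7) assms(5) E'G] by blast
  define m where "m = length zs"
  note f = pc_facts[OF pc ok]
  note mono = chain_mono[OF pc ok _ lm]
  have d1: "d \<ge> 1" using d2 by simp
  have cE'G: "card (E' \<inter> G) \<ge> 1" using E'G fG(1) by (simp add: Suc_le_eq card_gt_0_iff)
  have "card (G - E') = d - card (E' \<inter> G)" using card_diff_d[OF fE'(1) fG(1) fE'(2) fG(2)] .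
  then have md: "m \<le> d - 1" using cE'G lm m_def by simp
  have cnt: "\<forall>j\<le>m. card (Es!j \<inter> G) = card (E' \<inter> G) + j" using mono(1) d1 m_def by simp
  have step: "\<forall>j<m. Es!Suc j - Es!j \<subseteq> G \<and> Es!j \<inter> G \<subseteq> Es!Suc j" using mono(2) d1 m_def by simp
  have up: "\<forall>a b. a \<le> b \<longrightarrow> b \<le> m \<longrightarrow> Es!a \<inter> G \<subseteq> Es!b" using mono(4) d1 m_def by simp
  define g where "g j = (if j = 0 then v else (SOME y. y \<in> Es!j \<and> y \<notin> Es!(j - 1)))" for j
  have g_new: "g j \<in> Es!j \<and> g j \<notin> Es!(j - 1)" if "1 \<le> j" "j \<le> m" for j
  proof -
    have "card (Es!j \<inter> G) = card (Es!(j-1) \<inter> G) + 1" using cnt that by simp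
    then have "\<not> Es!j \<inter> G \<subseteq> Es!(j-1) \<inter> G"
      using f(6) that m_def by (metis card_mono finite_Int le_imp_less_Suc less_le_not_le Suc_eq_plus1 order.trans diff_le_self)
    then have "\<exists>y. y \<in> Es!j \<and> y \<notin> Es!(j - 1)" by blast
    then have "(SOME y. y \<in> Es!j \<and> y \<notin> Es!(j - 1)) \<in> Es!j \<and> (SOME y. y \<in> Es!j \<and> y \<notin> Es!(j - 1)) \<notin> Es!(j - 1)"
      by (rule someI_ex)
    moreover have "g j = (SOME y. y \<in> Es!j \<and> y \<notin> Es!(j - 1))" using that g_def by simp
    ultimately show ?thesis by simp
  qed
  have g_in: "g j \<in> Es!j \<and> g j \<in> G" if "j \<le> m" for j
  proof (cases "j = 0")
    case True
    then show ?thesis using f(2) assms(8,9) g_def by auto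
  next
    case False
    then have "g j \<in> Es!j - Es!(j-1)" using g_new that by simp
    moreover have "j - 1 < m" using that False by simp
    then have "Es!Suc (j-1) - Es!(j-1) \<subseteq> G" using step by blast
    moreover have "Suc (j-1) = j" using False by simp
    ultimately show ?thesis by auto
  qed
  have g_in2: "g j \<in> Es!Suc j" if "j < m" for j
    using g_in[of j] up[rule_format, of j "Suc j"] that by auto
  have g_in3: "g i \<in> Es!j" if "i \<le> j" "j \<le> m" for i j
    using g_in[of i] up[rule_format, of i j] that by auto
  define ys where "ys = map g [0..<m]"
  have lys: "length ys = m" unfolding ys_def by simp
  have ysn: "ys!k = g k" if "k < m" for k using that unfolding ys_def by simp
  have dys: "distinct ys"
  proof -
    have "inj_on g {0..<m}"
    proof (rule inj_onI)
      fix i j assume ij: "i \<in> {0..<m}" "j \<in> {0..<m}" "g i = g j"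
      show "i = j"
      proof (rule ccontr)
        assume "i \<noteq> j"
        then consider "i < j" | "j < i" by linarith
        then show False
        proof cases
          case 1
          then have "g j \<notin> Es!(j-1)" using g_new[of j] ij(2) by simp
          moreover have "g i \<in> Es!(j-1)" using g_in3[of i "j-1"] 1 ij(2) by simp
          ultimately show False using ij by simp
        next
          case 2
          then have "g i \<notin> Es!(i-1)" using g_new[of i] ij(1) by simp
          moreover have "g j \<in> Es!(i-1)" using g_in3[of j "i-1"] 2 ij(1) by simp
          ultimately show False using ij by simp
        qed
      qed
    qed
    then show ?thesis unfolding ys_def by (simp add: distinct_map)
  qed
  have ysG: "set ys \<subseteq> G" unfolding ys_def using g_in by auto
  have xys: "x \<notin> set ys" using ysG x assms(6) by blast
  have FEs: "F \<notin> set Es"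
  proof
    assume "F \<in> set Es"
    then obtain j where j: "j < length Es" "Es!j = F" by (metis in_set_conv_nth)
    then have "j \<le> m" using f(1) m_def by simp
    then have "card (Es!j \<inter> G) \<ge> 1" using cnt cE'G by simp
    then show False using j assms(6) by (simp add: Int_commute)
  qed
  let ?Es = "F # Es" and ?xs = "x # ys"
  have "proper_chain C F G ?Es ?xs"
    unfolding proper_chain_def Let_def
  proof (intro conjI allI impI)
    show "length ?Es = length ?xs + 1" using f(1) lys m_def by simp
    show "?Es!0 = F" by simp
    show "?Es!(length ?xs) = G" using f(3) lys m_def by simp
    show "card G \<le> card F" using fF fG by simp
    show "set ?Es \<subseteq> C" using assms(4) f(6) f(1)
      by (auto simp: in_set_conv_nth)
    show "distinct ?Es" using FEs f(4) by simp
    show "distinct ?xs" using xys dys by simp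
    show "?xs!0 \<in> ?Es!0" using x by simp
    have "G \<noteq> E'" using \<open>F \<inter> E' \<noteq> {}\<close> assms(6) by blast
    then have "\<not> G \<subseteq> E'" using b(4)[OF assms(5,7)] by blast
    then have "G - E' \<noteq> {}" by blast
    then have "0 < m" using lm m_def fG(1) by (simp add: card_gt_0_iff)
    then show "?xs!(length ?xs - 1) \<in> ?Es!(length ?xs)"
      using lys ysn g_in2[of "m-1"] by simp
  next
    fix k assume k: "1 \<le> k \<and> k \<le> length ?xs - 1"
    then have km: "1 \<le> k" "k \<le> m" using lys by auto
    show "?xs!(k - 1) \<in> ?Es!k"
    proof (cases "k = 1")
      case True then show ?thesis using x f(2) by simp
    next
      case False
      then have "?xs!(k-1) = g (k-2)" using km ysn
        by (metis Suc_diff_Suc diff_Suc_eq_diff_pred less_le_trans nth_Cons_Suc One_nat_def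
            Suc_1 diff_less less_one nat_less_le zero_less_diff le_add_diff_inverse2 numeral_2_eq_2)
      moreover have "?Es!k = Es!(k-1)" using km by (cases k) auto
      moreover have "g (k-2) \<in> Es!(k-1)" using g_in3 km by simp
      ultimately show ?thesis by simp
    qed
    have "?xs!k = g (k-1)" using km ysn by (cases k) auto
    moreover have "?Es!k = Es!(k-1)" using km by (cases k) auto
    moreover have "g (k-1) \<in> Es!(k-1)" using g_in km by simp
    ultimately show "?xs!k \<in> ?Es!k" by simp
  next
    fix i assume i: "i < length ?xs"
    show "card (?Es!i \<inter> ?Es!(i+1)) = card (?Es!(i+1)) - 1"
    proof (cases i)
      case 0
      then show ?thesis using cFE f(2) fE' by simp
    next
      case (Suc i')
      then have "i' < length zs" using i lys m_def by simp
      then have "card (Es!i' \<inter> Es!(i'+1)) = card (Es!(i'+1)) - 1"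
        using pc unfolding proper_chain_def Let_def by blast
      then show ?thesis using Suc by simp
    qed
  qed
  moreover have "length ?xs \<le> d" using lys md d2 by simp
  ultimately show ?thesis by blast
qed




lemma D_far:
  assumes "hypergraph V C" "uniform C d" "properly_connected C d" "F \<in> C"
    "G \<in> C" "G \<inter> F = {}" "G \<inter> nbhd C F = {}"
  shows "enat (d + 1) \<le> hdist C F G"
proof (rule ccontr)
  note b = basics[OF assms(1,2,4)]
  have ok: "\<forall>X\<in>C. finite X \<and> card X = d" and d2: "d \<ge> 2" using b by auto
  assume "\<not> enat (d + 1) \<le> hdist C F G"
  then have "hdist C F G \<le> enat d" using not_ge_Suc by blast
  then obtain Es xs where pc: "proper_chain C F G Es xs" "length xs \<le> d" using hdist_obtain by blast
  have "card (G - F) = d" using assms(6) ok assms(5) by (simp add: Diff_triv Int_commute)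
  then have l: "length xs = card (G - F)" using chain_lower[OF pc(1) ok] pc(2) d2 by simp
  have l1: "length xs \<ge> 1" using l \<open>card (G - F) = d\<close> d2 by simp
  obtain w where w: "Es!1 - F = {w}" "Es!1 \<in> C" using first_step[OF pc(1) ok _ l1] d2 by auto
  have "Es!1 \<subseteq> F \<union> G" using chain_mono(3)[OF pc(1) ok _ l] d2 l1 by auto
  then have "w \<in> G" using w by auto
  moreover have "w \<in> nbhd C F" using nbhdI w by metis
  ultimately show False using assms(7) by blast
qed



lemma D_far_rev:
  assumes "hypergraph V C" "uniform C d" "properly_connected C d" "F \<in> C"
    "G \<in> C" "G \<inter> F = {}" "G \<inter> nbhd C F = {}"
  shows "enat (d + 1) \<le> hdist C G F"
proof (rule ccontr)
  note b = basics[OF assms(1,2,4)]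
  have ok: "\<forall>X\<in>C. finite X \<and> card X = d" and d2: "d \<ge> 2" using b by auto
  assume "\<not> enat (d + 1) \<le> hdist C G F"
  then have "hdist C G F \<le> enat d" using not_ge_Suc by blast
  then obtain Es xs where pc: "proper_chain C G F Es xs" "length xs \<le> d" using hdist_obtain by blast
  have "F - G = F" using assms(6) by blast
  then have "card (F - G) = d" using ok assms(4) by simp
  then have l: "length xs = card (F - G)" using chain_lower[OF pc(1) ok] pc(2) d2 by simp
  then have ld: "length xs = d" using \<open>card (F - G) = d\<close> by simp
  note f = pc_facts[OF pc(1) ok]
  define X where "X = Es!(d-1)"
  have "card (Es!(length xs - 1) \<inter> F) = card (G \<inter> F) + (length xs - 1)"
    using chain_mono(1)[OF pc(1) ok _ l] d2 by auto
  then have cXF: "card (X \<inter> F) = d - 1" using ld assms(6) X_def by simp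
  have XC: "X \<in> C" "finite X" "card X = d" using f(6) ld X_def by auto
  have "X \<subseteq> G \<union> F" using chain_mono(3)[OF pc(1) ok _ l] d2 ld X_def by auto
  have "card (X - F) = d - card (F \<inter> X)"
    using card_diff_d[of F X d] XC ok assms(4) by simp
  then have "card (X - F) = 1" using cXF d2 by (simp add: Int_commute)
  then obtain u where u: "X - F = {u}" by (meson card_1_singletonE)
  then have "u \<in> G" using \<open>X \<subseteq> G \<union> F\<close> by blast
  moreover have "u \<in> nbhd C F" using nbhdI[OF XC(1) u] .
  ultimately show False using assms(7) by blast
qed



lemma far_D:
  assumes "hypergraph V C" "uniform C d" "properly_connected C d" "F \<in> C"
    "G \<in> C" "enat (d + 1) \<le> hdist C F G"
  shows "G \<inter> F = {}" "G \<inter> nbhd C F = {}"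
proof -
  note b = basics[OF assms(1,2,4)]
  have ok: "\<forall>X\<in>C. finite X \<and> card X = d" and d2: "d \<ge> 2" using b by auto
  show GF: "G \<inter> F = {}"
  proof (rule ccontr)
    assume "G \<inter> F \<noteq> {}"
    then have "hdist C F G = enat (d - card (F \<inter> G))"
      using assms(3,4,5) unfolding properly_connected_def by blast
    then have "enat (d + 1) \<le> enat (d - card (F \<inter> G))" using assms(6) by simp
    then show False by simp
  qed
  show "G \<inter> nbhd C F = {}"
  proof (rule ccontr)
    assume "G \<inter> nbhd C F \<noteq> {}"
    then obtain v where v: "v \<in> G" "v \<in> nbhd C F" by blast
    from v(2) have "v \<in> \<Union>{E - F | E. E \<in> C \<and> card (E - F) = 1}" unfolding nbhd_def .
    then obtain Y where Y: "Y \<in> {E - F | E. E \<in> C \<and> card (E - F) = 1}" "v \<in> Y" by (rule UnionE)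
    then obtain E' where E': "E' \<in> C" "card (E' - F) = 1" "v \<in> E' - F" by auto
    then have s: "E' - F = {v}" by (metis card_1_singletonE singletonD)
    obtain Es xs where "proper_chain C F G Es xs" "length xs \<le> d"
      using construct[OF assms(1-5) GF E'(1) s v(1)] by blast
    then have "hdist C F G \<le> enat d" using hdist_le[of C F G Es xs] by (meson enat_ord_simps(1) order_trans)
    then show False using assms(6) not_ge_Suc by blast
  qed
qed



lemma D_pair:
  assumes "hypergraph V C" "uniform C d" "properly_connected C d" "F \<in> C"
    "E \<in> C" "G \<in> C" "E \<subseteq> A" "G \<subseteq> A" "hdist C E G \<le> enat d"
  shows "hdist (induced C A) E G \<le> enat d"
proof -
  note b = basics[OF assms(1,2,4)]
  have ok: "\<forall>X\<in>C. finite X \<and> card X = d" and d2: "d \<ge> 2" using b by auto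
  have cGE: "card (G - E) = d - card (E \<inter> G)" using card_diff_d[of E G d] ok assms(5,6) by simp
  have "hdist C E G \<le> enat (card (G - E))"
  proof (cases "E \<inter> G = {}")
    case True
    then show ?thesis using assms(9) cGE by simp
  next
    case False
    then have "hdist C E G = enat (d - card (E \<inter> G))"
      using assms(3,5,6) unfolding properly_connected_def by blast
    then show ?thesis using cGE by simp
  qed
  then obtain Es xs where pc: "proper_chain C E G Es xs" "length xs \<le> card (G - E)"
    using hdist_obtain by blast
  have l: "length xs = card (G - E)" using chain_lower[OF pc(1) ok] pc(2) d2 by simp
  note f = pc_facts[OF pc(1) ok]
  have sub: "\<forall>j\<le>length xs. Es!j \<subseteq> E \<union> G" using chain_mono(3)[OF pc(1) ok _ l] d2 by auto
  have "set Es \<subseteq> induced C A"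
  proof
    fix X assume "X \<in> set Es"
    then obtain j where j: "j < length Es" "Es!j = X" by (metis in_set_conv_nth)
    then have "j \<le> length xs" using f(1) by simp
    then show "X \<in> induced C A" using sub f(6) j assms(7,8) unfolding induced_def by blast
  qed
  then have "proper_chain (induced C A) E G Es xs" using pc(1)
    unfolding proper_chain_def Let_def by blast
  then have "hdist (induced C A) E G \<le> enat (length xs)" by (rule hdist_le)
  moreover have "length xs \<le> d" using l cGE by simp
  ultimately show ?thesis using order_trans by fastforce
qed



theorem theorem4p1:
  fixes V :: "'a set" and C :: "'a set set" and F :: "'a set" and d :: nat
  assumes "hypergraph V C" and "uniform C d" and "properly_connected C d" and "F \<in> C"
  shows "(\<forall>E\<in>C. E \<in> colon C F \<longleftrightarrow> hdist C F E \<ge> enat (d + 1))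
    \<and> colon C F = induced C (V - (F \<union> nbhd C F))
    \<and> colon C F = {G \<in> C. hdist C F G \<ge> enat (d + 1)}
    \<and> cnum C d \<ge> cnum (colon C F) d + 1"
proof -
  note b = basics[OF assms(1,2,4)]
  have ok: "\<forall>X\<in>C. finite X \<and> card X = d" and d2: "d \<ge> 2" using b by auto
  define A where "A = V - (F \<union> nbhd C F)"
  define D where "D = induced C A"
  have cD: "colon C F = D" unfolding D_def A_def by (rule colon_eq[OF assms])
  have Dchar: "G \<in> D \<longleftrightarrow> G \<in> C \<and> G \<inter> F = {} \<and> G \<inter> nbhd C F = {}" for G
    unfolding D_def A_def induced_def using b(3) by blast
  have iii: "D = {G \<in> C. hdist C F G \<ge> enat (d + 1)}"
  proof (intro set_eqI iffI)
    fix G assume "G \<in> D"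
    then have g: "G \<in> C" "G \<inter> F = {}" "G \<inter> nbhd C F = {}" using Dchar by auto
    have "enat (d + 1) \<le> hdist C F G" using D_far[OF assms g] .
    then show "G \<in> {G \<in> C. hdist C F G \<ge> enat (d + 1)}" using g by simp
  next
    fix G assume "G \<in> {G \<in> C. hdist C F G \<ge> enat (d + 1)}"
    then have g: "G \<in> C" "enat (d + 1) \<le> hdist C F G" by auto
    show "G \<in> D" using Dchar far_D[OF assms g] g(1) by blast
  qed
  have DC: "D \<subseteq> C" unfolding D_def induced_def by blast
  have fD: "finite D" using b(5) DC finite_subset by blast
  define P where "P X = {card S | S. S \<subseteq> X \<and> pairwise_disjoint_t X (d + 1) S}" for X :: "'a set set"
  have Pfin: "finite (P X)" if "finite X" for X
  proof -
    have "P X \<subseteq> card ` Pow X" unfolding P_def by blast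
    then show ?thesis using that by (meson finite_Pow_iff finite_imageI finite_subset)
  qed
  have cn: "cnum X d = Max (P X)" for X unfolding cnum_def P_def by (rule refl)
  have "{} \<subseteq> D \<and> pairwise_disjoint_t D (d + 1) {}" unfolding pairwise_disjoint_t_def by simp
  then have "card ({}::'a set set) \<in> P D" unfolding P_def by blast
  then have "P D \<noteq> {}" by blast
  then have "Max (P D) \<in> P D" using Max_in Pfin[OF fD] by blast
  then have "\<exists>S. Max (P D) = card S \<and> S \<subseteq> D \<and> pairwise_disjoint_t D (d + 1) S"
    unfolding P_def by blast
  then obtain S0 where S0': "Max (P D) = card S0" "S0 \<subseteq> D" "pairwise_disjoint_t D (d + 1) S0"
    by blast
  have S0: "S0 \<subseteq> D" "pairwise_disjoint_t D (d + 1) S0" "card S0 = cnum D d"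
    using S0' cn[of D] by auto
  have Fne: "F \<noteq> {}" using ok assms(4) d2 by (metis card.empty not_numeral_le_zero)
  have FS0: "F \<notin> S0" using S0(1) Dchar Fne by blast
  have fS0: "finite S0" using S0(1) fD finite_subset by blast
  have pw: "pairwise_disjoint_t C (d + 1) (insert F S0)"
    unfolding pairwise_disjoint_t_def
  proof (intro ballI impI)
    fix E G assume EG: "E \<in> insert F S0" "G \<in> insert F S0" "E \<noteq> G"
    show "enat (d + 1) \<le> hdist C E G"
    proof (cases "E = F")
      case True
      then have "G \<in> D" using EG S0(1) by blast
      then have g: "G \<in> C" "G \<inter> F = {}" "G \<inter> nbhd C F = {}" using Dchar by auto
      show ?thesis using D_far[OF assms g] True by simp
    next
      case False
      then have ED: "E \<in> S0" using EG by blast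
      show ?thesis
      proof (cases "G = F")
        case True
        have "E \<in> D" using ED S0(1) by blast
        then have g: "E \<in> C" "E \<inter> F = {}" "E \<inter> nbhd C F = {}" using Dchar by auto
        show ?thesis using D_far_rev[OF assms g] True by simp
      next
        case False
        then have GD: "G \<in> S0" using EG by blast
        have far: "enat (d + 1) \<le> hdist D E G" using S0(2) ED GD EG(3)
          unfolding pairwise_disjoint_t_def by blast
        show ?thesis
        proof (rule ccontr)
          assume "\<not> enat (d + 1) \<le> hdist C E G"
          then have h: "hdist C E G \<le> enat d" using not_ge_Suc by blast
          have "E \<in> D" "G \<in> D" using ED GD S0(1) by auto
          then have "E \<in> C" "G \<in> C" "E \<subseteq> A" "G \<subseteq> A" unfolding D_def induced_def by auto
          then have "hdist (induced C A) E G \<le> enat d" using D_pair[OF assms] h by blast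
          then show False using far not_ge_Suc D_def by blast
        qed
      qed
    qed
  qed
  have "card (insert F S0) \<in> P C" unfolding P_def using pw assms(4) S0(1) DC by blast
  then have "card (insert F S0) \<le> cnum C d" unfolding cn using Pfin[OF b(5)] by (rule Max_ge[rotated])
  moreover have "card (insert F S0) = card S0 + 1" using fS0 FS0 by simp
  ultimately have iv: "cnum C d \<ge> cnum (colon C F) d + 1" using S0(3) cD by simp
  show ?thesis
  proof (intro conjI)
    show "\<forall>E\<in>C. E \<in> colon C F \<longleftrightarrow> hdist C F E \<ge> enat (d + 1)" using cD iii by blast
    show "colon C F = induced C (V - (F \<union> nbhd C F))" using cD D_def A_def by simp
    show "colon C F = {G \<in> C. hdist C F G \<ge> enat (d + 1)}" using cD iii by simp
    show "cnum C d \<ge> cnum (colon C F) d + 1" by (rule iv)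
  qed
qed

end
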